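(* Let $k\ge 1$ and consider the Kneser graph $K(2k+1,k)$. Let $r_{max}=\binom{2k}{k-1}$, and for real $r>0$ define $$\beta(r)=\binom{2k+1}{k}-\frac{1}{r}\binom{2k}{k-1}^2-r.$$ Then for every real $r^*$ with $0<r^*\le r_{max}$, $$\min\{|B(S)| : S\subseteq V,\ r^*\le |S|\le r_{max}\}\;\ge\;\beta(r^* ).$$
   Context: The Kneser graph $K(n,k)$ has as vertices the $k$-element subsets of $[n]$, with two vertices adjacent if and only if they are disjoint. For a graph $G=(V,E)$ and $S\subseteq V$, the boundary of $S$ is $B(S)=\{a\in V\setminus S:\exists b\in S,\ (a,b)\in E\}$. *)

theory Defs
  imports Complex_Main
begin

definition boundary :: "'a set \<Rightarrow> ('a \<Rightarrow> 'a \<Rightarrow> bool) \<Rightarrow> 'a set \<Rightarrow> 'a set" where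
  "boundary V E S = {a \<in> V - S. \<exists>b\<in>S. E a b}"

definition kneser_vertices :: "nat \<Rightarrow> nat \<Rightarrow> nat set set" where
  "kneser_vertices n k = {A. A \<subseteq> {1..n} \<and> card A = k}"

definition kneser_adj :: "nat set \<Rightarrow> nat set \<Rightarrow> bool" where
  "kneser_adj A B \<longleftrightarrow> A \<inter> B = {}"

end

theory Submission imports Defs "HOL-Analysis.Convex" begin


definition L :: "nat \<Rightarrow> nat \<Rightarrow> nat set set" where
  "L n j = {Y. Y \<subseteq> {1..n} \<and> card Y = j}"

lemma finite_L[simp]: "finite (L n j)"
  unfolding L_def by (rule finite_subset[of _ "Pow {1..n}"]) auto

lemma card_L: "card (L n j) = n choose j"
  unfolding L_def using n_subsets[of "{1..n}" j] by simp

lemma L_finite_mem: "Y \<in> L n j \<Longrightarrow> finite Y"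
  unfolding L_def using finite_subset by blast

lemma sq_expand:
  fixes f :: "'b \<Rightarrow> real"
  assumes "finite V" "finite X"
  shows "(\<Sum>x\<in>X. (\<Sum>y\<in>V. if P x y then f y else 0)^2)
       = (\<Sum>y\<in>V. \<Sum>y'\<in>V. f y * f y' * real (card {x\<in>X. P x y \<and> P x y'}))"
proof -
  have "(\<Sum>x\<in>X. (\<Sum>y\<in>V. if P x y then f y else 0)^2)
      = (\<Sum>x\<in>X. \<Sum>y\<in>V. \<Sum>y'\<in>V. (if P x y then f y else 0) * (if P x y' then f y' else 0))"
    by (simp add: power2_eq_square sum_product)
  also have "\<dots> = (\<Sum>y\<in>V. \<Sum>y'\<in>V. \<Sum>x\<in>X. (if P x y then f y else 0) * (if P x y' then f y' else 0))"
    by (subst sum.swap, subst (2) sum.swap, simp)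
  also have "\<dots> = (\<Sum>y\<in>V. \<Sum>y'\<in>V. f y * f y' * real (card {x\<in>X. P x y \<and> P x y'}))"
  proof (intro sum.cong refl)
    fix y y'
    have "(\<Sum>x\<in>X. (if P x y then f y else 0) * (if P x y' then f y' else 0))
        = (\<Sum>x\<in>X. if P x y \<and> P x y' then f y * f y' else 0)"
      by (intro sum.cong) auto
    also have "\<dots> = f y * f y' * real (card {x\<in>X. P x y \<and> P x y'})"
      using assms by (simp add: sum.If_cases Collect_conj_eq[symmetric] Int_def)
    finally show "(\<Sum>x\<in>X. (if P x y then f y else 0) * (if P x y' then f y' else 0))
        = f y * f y' * real (card {x\<in>X. P x y \<and> P x y'})" .
  qed
  finally show ?thesis .
qed

lemma count_super:
  assumes "finite N" "B \<subseteq> N"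
  shows "card {Y. Y \<subseteq> N \<and> card Y = j \<and> B \<subseteq> Y} = (if card B \<le> j then (card N - card B) choose (j - card B) else 0)"
proof (cases "card B \<le> j")
  case False
  have "{Y. Y \<subseteq> N \<and> card Y = j \<and> B \<subseteq> Y} = {}"
    using False assms by (auto dest: card_mono[OF finite_subset[OF _ assms(1)]])
  then have "card {Y. Y \<subseteq> N \<and> card Y = j \<and> B \<subseteq> Y} = 0" by (simp only: card.empty)
  then show ?thesis using False by simp
next
  case True
  have fB: "finite B" using assms finite_subset by blast
  have "bij_betw (\<lambda>Y. Y - B) {Y. Y \<subseteq> N \<and> card Y = j \<and> B \<subseteq> Y} {C. C \<subseteq> N - B \<and> card C = j - card B}"
  proof (rule bij_betw_byWitness[where f' = "\<lambda>C. C \<union> B"])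
    show "\<forall>a\<in>{Y. Y \<subseteq> N \<and> card Y = j \<and> B \<subseteq> Y}. a - B \<union> B = a" by auto
    show "\<forall>a'\<in>{C. C \<subseteq> N - B \<and> card C = j - card B}. a' \<union> B - B = a'" by auto
    show "(\<lambda>Y. Y - B) ` {Y. Y \<subseteq> N \<and> card Y = j \<and> B \<subseteq> Y} \<subseteq> {C. C \<subseteq> N - B \<and> card C = j - card B}"
      using fB by (auto simp: card_Diff_subset)
    show "(\<lambda>C. C \<union> B) ` {C. C \<subseteq> N - B \<and> card C = j - card B} \<subseteq> {Y. Y \<subseteq> N \<and> card Y = j \<and> B \<subseteq> Y}"
    proof
      fix Y assume "Y \<in> (\<lambda>C. C \<union> B) ` {C. C \<subseteq> N - B \<and> card C = j - card B}"
      then obtain C where Y: "Y = C \<union> B" and "C \<subseteq> N - B" "card C = j - card B" by blast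
      moreover have "finite C" using \<open>C \<subseteq> N - B\<close> assms finite_subset by blast
      moreover have "C \<inter> B = {}" using \<open>C \<subseteq> N - B\<close> by blast
      ultimately have "card (C \<union> B) = j"
        using assms True fB by (simp add: card_Un_disjoint)
      moreover have "C \<union> B \<subseteq> N" using \<open>C \<subseteq> N - B\<close> assms by blast
      ultimately show "Y \<in> {Y. Y \<subseteq> N \<and> card Y = j \<and> B \<subseteq> Y}" using Y by blast
    qed
  qed
  then have "card {Y. Y \<subseteq> N \<and> card Y = j \<and> B \<subseteq> Y} = card {C. C \<subseteq> N - B \<and> card C = j - card B}"
    by (rule bij_betw_same_card)
  also have "\<dots> = (card N - card B) choose (j - card B)"
    using assms by (simp add: n_subsets card_Diff_subset fB)
  finally show ?thesis using True by simp
qed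

lemma count_sub:
  assumes "C \<subseteq> {1..n}"
  shows "card {U\<in>L n m. U \<subseteq> C} = card C choose m"
proof -
  have "{U\<in>L n m. U \<subseteq> C} = {U. U \<subseteq> C \<and> card U = m}"
    using assms unfolding L_def by blast
  moreover have "finite C" using assms finite_subset by blast
  ultimately show ?thesis by (simp add: n_subsets)
qed

lemma count_sup:
  assumes "B \<subseteq> {1..n}"
  shows "card {Y\<in>L n j. B \<subseteq> Y} = (if card B \<le> j then (n - card B) choose (j - card B) else 0)"
proof -
  have "{Y\<in>L n j. B \<subseteq> Y} = {Y. Y \<subseteq> {1..n} \<and> card Y = j \<and> B \<subseteq> Y}"
    unfolding L_def by blast
  then show ?thesis using count_super[OF _ assms, of j] by simp
qed

lemma count_pair:
  assumes "m \<ge> 1" "Z \<in> L n m" "Z' \<in> L n m"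
  shows "real (card {Y\<in>L n (Suc m). Z \<subseteq> Y \<and> Z' \<subseteq> Y})
       = real (card {U\<in>L n (m-1). U \<subseteq> Z \<and> U \<subseteq> Z'}) + (if Z = Z' then real n - 2 * real m else 0)"
proof -
  have ZS: "Z \<subseteq> {1..n}" "Z' \<subseteq> {1..n}" "card Z = m" "card Z' = m" using assms unfolding L_def by auto
  have fZ: "finite Z" "finite Z'" using ZS finite_subset by (blast, blast)
  have e1: "{Y\<in>L n (Suc m). Z \<subseteq> Y \<and> Z' \<subseteq> Y} = {Y\<in>L n (Suc m). Z \<union> Z' \<subseteq> Y}" by blast
  have e2: "{U\<in>L n (m-1). U \<subseteq> Z \<and> U \<subseteq> Z'} = {U\<in>L n (m-1). U \<subseteq> Z \<inter> Z'}" by blast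
  have c1: "card {Y\<in>L n (Suc m). Z \<subseteq> Y \<and> Z' \<subseteq> Y} = (if card (Z \<union> Z') \<le> Suc m then (n - card (Z \<union> Z')) choose (Suc m - card (Z \<union> Z')) else 0)"
    unfolding e1 by (rule count_sup) (use ZS in auto)
  have c2: "card {U\<in>L n (m-1). U \<subseteq> Z \<and> U \<subseteq> Z'} = card (Z \<inter> Z') choose (m - 1)"
    unfolding e2 by (rule count_sub) (use ZS in auto)
  have ui: "card (Z \<union> Z') + card (Z \<inter> Z') = 2 * m" using card_Un_Int[OF fZ] ZS by simp
  have mn: "m \<le> n" using card_mono[OF _ ZS(1)] ZS by simp
  show ?thesis
  proof (cases "Z = Z'")
    case True
    then have "card (Z \<union> Z') = m" "card (Z \<inter> Z') = m" using ZS by auto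
    moreover have "Suc m - m = 1" by simp
    moreover have "m choose (m - 1) = m"
      using binomial_symmetric[of "m-1" m] assms(1) by simp
    ultimately have "card {Y\<in>L n (Suc m). Z \<subseteq> Y \<and> Z' \<subseteq> Y} = n - m"
      "card {U\<in>L n (m-1). U \<subseteq> Z \<and> U \<subseteq> Z'} = m" using c1 c2 by simp_all
    then show ?thesis using True mn by (simp add: of_nat_diff)
  next
    case False
    have "card (Z \<inter> Z') \<noteq> m"
    proof
      assume "card (Z \<inter> Z') = m"
      then have "Z \<inter> Z' = Z" "Z \<inter> Z' = Z'"
        using card_subset_eq[OF fZ(1), of "Z \<inter> Z'"] card_subset_eq[OF fZ(2), of "Z \<inter> Z'"] ZS by auto
      then show False using False by blast
    qed
    moreover have "card (Z \<inter> Z') \<le> m" using card_mono[OF fZ(1), of "Z \<inter> Z'"] ZS by simp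
    ultimately have lt: "card (Z \<inter> Z') < m" by simp
    show ?thesis
    proof (cases "card (Z \<inter> Z') = m - 1")
      case True
      then have "card (Z \<union> Z') = Suc m" using ui assms(1) by simp
      then show ?thesis using c1 c2 True False by simp
    next
      case F2: False
      then have "card (Z \<inter> Z') < m - 1" using lt by simp
      then have "card (Z \<union> Z') > Suc m" using ui by simp
      then have nl: "\<not> card (Z \<union> Z') \<le> Suc m" by simp
      have a1: "card {Y\<in>L n (Suc m). Z \<subseteq> Y \<and> Z' \<subseteq> Y} = 0"
        using c1 by (simp only: nl if_False)
      have a2: "card {U\<in>L n (m-1). U \<subseteq> Z \<and> U \<subseteq> Z'} = 0"
        using c2 \<open>card (Z \<inter> Z') < m - 1\<close> by simp
      show ?thesis unfolding a1 a2 using False by simp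
    qed
  qed
qed

definition W :: "nat \<Rightarrow> nat \<Rightarrow> (nat set \<Rightarrow> real) \<Rightarrow> nat set \<Rightarrow> real" where
  "W n j f Z = (\<Sum>Y\<in>L n j. if Z \<subseteq> Y then f Y else 0)"

lemma L0: "L n 0 = {{}}"
  unfolding L_def by (auto dest: finite_subset[OF _ finite_atLeastAtMost])

lemma sum_if_card:
  assumes "finite A"
  shows "(\<Sum>x\<in>A. if P x then c else 0) = (c::real) * real (card {x\<in>A. P x})"
  using assms by (simp add: sum.inter_filter[symmetric])

lemma sum_W:
  "(\<Sum>Z\<in>L n m. W n (Suc m) f Z) = real (Suc m) * (\<Sum>Y\<in>L n (Suc m). f Y)"
proof -
  have "(\<Sum>Z\<in>L n m. W n (Suc m) f Z) = (\<Sum>Y\<in>L n (Suc m). \<Sum>Z\<in>L n m. if Z \<subseteq> Y then f Y else 0)"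
    unfolding W_def by (rule sum.swap)
  also have "\<dots> = (\<Sum>Y\<in>L n (Suc m). f Y * real (Suc m))"
  proof (rule sum.cong[OF refl])
    fix Y assume Y: "Y \<in> L n (Suc m)"
    then have "Y \<subseteq> {1..n}" "card Y = Suc m" unfolding L_def by auto
    then have "card {Z\<in>L n m. Z \<subseteq> Y} = Suc m" using count_sub[of Y n m] by simp
    then show "(\<Sum>Z\<in>L n m. if Z \<subseteq> Y then f Y else 0) = f Y * real (Suc m)"
      by (simp add: sum_if_card)
  qed
  also have "\<dots> = real (Suc m) * (\<Sum>Y\<in>L n (Suc m). f Y)"
    by (simp add: sum_distrib_left algebra_simps)
  finally show ?thesis .
qed

lemma inner_swap:
  "(\<Sum>Z\<in>L n m. (W n j f Z)^2) = (\<Sum>Y\<in>L n j. f Y * (\<Sum>Z\<in>L n m. if Z \<subseteq> Y then W n j f Z else 0))"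
proof -
  have "(\<Sum>Z\<in>L n m. (W n j f Z)^2) = (\<Sum>Z\<in>L n m. W n j f Z * (\<Sum>Y\<in>L n j. if Z \<subseteq> Y then f Y else 0))"
    by (simp add: power2_eq_square W_def[symmetric])
  also have "\<dots> = (\<Sum>Z\<in>L n m. \<Sum>Y\<in>L n j. if Z \<subseteq> Y then f Y * W n j f Z else 0)"
    unfolding sum_distrib_left by (intro sum.cong refl) auto
  also have "\<dots> = (\<Sum>Y\<in>L n j. \<Sum>Z\<in>L n m. if Z \<subseteq> Y then f Y * W n j f Z else 0)"
    by (rule sum.swap)
  also have "\<dots> = (\<Sum>Y\<in>L n j. f Y * (\<Sum>Z\<in>L n m. if Z \<subseteq> Y then W n j f Z else 0))"
    unfolding sum_distrib_left by (intro sum.cong refl) auto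
  finally show ?thesis .
qed

lemma h_expand:
  assumes "m \<ge> 1"
  shows "(\<Sum>Y\<in>L n (Suc m). (\<Sum>Z\<in>L n m. if Z \<subseteq> Y then g Z else 0)^2)
       = (\<Sum>U\<in>L n (m-1). (W n m g U)^2) + (real n - 2 * real m) * (\<Sum>Z\<in>L n m. (g Z)^2)"
proof -
  have "(\<Sum>Y\<in>L n (Suc m). (\<Sum>Z\<in>L n m. if Z \<subseteq> Y then g Z else 0)^2)
     = (\<Sum>Z\<in>L n m. \<Sum>Z'\<in>L n m. g Z * g Z' * real (card {Y\<in>L n (Suc m). Z \<subseteq> Y \<and> Z' \<subseteq> Y}))"
    by (rule sq_expand) simp_all
  also have "\<dots> = (\<Sum>Z\<in>L n m. \<Sum>Z'\<in>L n m. g Z * g Z' * real (card {U\<in>L n (m-1). U \<subseteq> Z \<and> U \<subseteq> Z'})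
        + (if Z = Z' then (real n - 2 * real m) * (g Z)^2 else 0))"
    by (intro sum.cong refl) (simp add: count_pair[OF assms] distrib_left power2_eq_square)
  also have "\<dots> = (\<Sum>Z\<in>L n m. \<Sum>Z'\<in>L n m. g Z * g Z' * real (card {U\<in>L n (m-1). U \<subseteq> Z \<and> U \<subseteq> Z'}))
        + (real n - 2 * real m) * (\<Sum>Z\<in>L n m. (g Z)^2)"
    by (simp add: sum.distrib sum_distrib_left)
  also have "(\<Sum>Z\<in>L n m. \<Sum>Z'\<in>L n m. g Z * g Z' * real (card {U\<in>L n (m-1). U \<subseteq> Z \<and> U \<subseteq> Z'}))
      = (\<Sum>U\<in>L n (m-1). (W n m g U)^2)"
    unfolding W_def by (rule sq_expand[symmetric]) simp_all
  finally show ?thesis .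
qed

lemma Wbound:
  assumes "1 \<le> j" "j \<le> n" "(\<Sum>Y\<in>L n j. f Y) = 0"
  shows "(\<Sum>Z\<in>L n (j-1). (W n j f Z)^2) \<le> (real j - 1) * (real n - real j) * (\<Sum>Y\<in>L n j. (f Y)^2)"
  using assms
proof (induction j arbitrary: f rule: nat_induct_at_least)
  case base
  have "W n 1 f {} = 0" using base unfolding W_def by simp
  then show ?case by (simp add: L0)
next
  case (Suc m f)
  define g where "g = W n (Suc m) f"
  define h where "h Y = (\<Sum>Z\<in>L n m. if Z \<subseteq> Y then g Z else 0)" for Y
  define G where "G = (\<Sum>Z\<in>L n m. (g Z)^2)"
  define F where "F = (\<Sum>Y\<in>L n (Suc m). (f Y)^2)"
  define H where "H = (\<Sum>Y\<in>L n (Suc m). (h Y)^2)"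
  define \<mu> where "\<mu> = real m * (real n - real (Suc m))"
  have sg: "(\<Sum>Z\<in>L n m. g Z) = 0" using sum_W[of n m f] Suc.prems unfolding g_def by simp
  have IH: "(\<Sum>U\<in>L n (m-1). (W n m g U)^2) \<le> (real m - 1) * (real n - real m) * G"
    using Suc.IH[of g] Suc.prems sg unfolding G_def by simp
  have HG: "H = (\<Sum>U\<in>L n (m-1). (W n m g U)^2) + (real n - 2 * real m) * G"
    unfolding H_def h_def G_def by (rule h_expand[OF Suc.hyps])
  have Hle: "H \<le> \<mu> * G"
  proof -
    have "H \<le> (real m - 1) * (real n - real m) * G + (real n - 2 * real m) * G" using HG IH by simp
    also have "\<dots> = \<mu> * G" unfolding \<mu>_def by (simp add: algebra_simps)
    finally show ?thesis .
  qed
  have Gsw: "G = (\<Sum>Y\<in>L n (Suc m). f Y * h Y)"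
    unfolding G_def h_def g_def by (rule inner_swap)
  have CS: "G^2 \<le> F * H" unfolding Gsw F_def H_def by (rule Cauchy_Schwarz_ineq_sum)
  have G0: "G \<ge> 0" "F \<ge> 0" unfolding G_def F_def by (simp_all add: sum_nonneg)
  have mu0: "\<mu> \<ge> 0" unfolding \<mu>_def using Suc.prems by simp
  have "G \<le> \<mu> * F"
  proof (cases "G = 0")
    case True then show ?thesis using mu0 G0 by simp
  next
    case False
    then have Gp: "G > 0" using G0 by simp
    have "G * G \<le> F * (\<mu> * G)" using CS Hle G0 mult_left_mono[OF Hle, of F]
      by (simp add: power2_eq_square)
    then have "G * G \<le> (\<mu> * F) * G" by (simp add: algebra_simps)
    then show ?thesis using Gp by simp
  qed
  then show ?case unfolding G_def F_def g_def \<mu>_def by simp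
qed

definition Aop :: "nat \<Rightarrow> (nat set \<Rightarrow> real) \<Rightarrow> nat set \<Rightarrow> real" where
  "Aop k f X = (\<Sum>Y\<in>L (2*k+1) k. if X \<inter> Y = {} then f Y else 0)"

lemma count_A:
  assumes "k \<ge> 1" "Y \<in> L (2*k+1) k" "Y' \<in> L (2*k+1) k"
  shows "real (card {X\<in>L (2*k+1) k. X \<inter> Y = {} \<and> X \<inter> Y' = {}})
       = real (card {Z\<in>L (2*k+1) (k-1). Z \<subseteq> Y \<and> Z \<subseteq> Y'}) + (if Y = Y' then 1 else 0)"
proof -
  let ?n = "2*k+1"
  have YS: "Y \<subseteq> {1..?n}" "Y' \<subseteq> {1..?n}" "card Y = k" "card Y' = k" using assms unfolding L_def by auto
  have fY: "finite Y" "finite Y'" using YS finite_subset by (blast, blast)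
  have e1: "{X\<in>L ?n k. X \<inter> Y = {} \<and> X \<inter> Y' = {}} = {X\<in>L ?n k. X \<subseteq> {1..?n} - (Y \<union> Y')}"
    unfolding L_def by blast
  have e2: "{Z\<in>L ?n (k-1). Z \<subseteq> Y \<and> Z \<subseteq> Y'} = {Z\<in>L ?n (k-1). Z \<subseteq> Y \<inter> Y'}" by blast
  have c1: "card {X\<in>L ?n k. X \<inter> Y = {} \<and> X \<inter> Y' = {}} = card ({1..?n} - (Y \<union> Y')) choose k"
    unfolding e1 by (rule count_sub) auto
  have c2: "card {Z\<in>L ?n (k-1). Z \<subseteq> Y \<and> Z \<subseteq> Y'} = card (Y \<inter> Y') choose (k-1)"
    unfolding e2 by (rule count_sub) (use YS in auto)
  have ui: "card (Y \<union> Y') + card (Y \<inter> Y') = 2 * k" using card_Un_Int[OF fY] YS by simp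
  have cd: "card ({1..?n} - (Y \<union> Y')) = ?n - card (Y \<union> Y')"
    using YS by (subst card_Diff_subset) (auto intro: finite_subset)
  define a where "a = card (Y \<inter> Y')"
  have ak: "a \<le> k" unfolding a_def using card_mono[OF fY(1), of "Y \<inter> Y'"] YS by simp
  have cd2: "card ({1..?n} - (Y \<union> Y')) = Suc a" using cd ui unfolding a_def by simp
  have pas: "Suc a choose k = (a choose (k-1)) + (a choose k)"
    using binomial_Suc_Suc[of a "k-1"] assms(1) by simp
  have "a choose k = (if Y = Y' then 1 else 0)"
  proof (cases "Y = Y'")
    case True then have "a = k" unfolding a_def using YS by simp
    then show ?thesis using True by simp
  next
    case False
    have "a \<noteq> k"
    proof
      assume "a = k"
      then have "Y \<inter> Y' = Y" "Y \<inter> Y' = Y'"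
        using card_subset_eq[OF fY(1), of "Y \<inter> Y'"] card_subset_eq[OF fY(2), of "Y \<inter> Y'"] YS
        unfolding a_def by auto
      then show False using False by blast
    qed
    then have "a < k" using ak by simp
    then show ?thesis using False by simp
  qed
  then show ?thesis using c1 c2 cd2 pas unfolding a_def by simp
qed

lemma A_expand:
  assumes "k \<ge> 1"
  shows "(\<Sum>X\<in>L (2*k+1) k. (Aop k f X)^2)
       = (\<Sum>Z\<in>L (2*k+1) (k-1). (W (2*k+1) k f Z)^2) + (\<Sum>Y\<in>L (2*k+1) k. (f Y)^2)"
proof -
  let ?n = "2*k+1"
  have "(\<Sum>X\<in>L ?n k. (Aop k f X)^2)
     = (\<Sum>Y\<in>L ?n k. \<Sum>Y'\<in>L ?n k. f Y * f Y' * real (card {X\<in>L ?n k. X \<inter> Y = {} \<and> X \<inter> Y' = {}}))"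
    unfolding Aop_def by (rule sq_expand) simp_all
  also have "\<dots> = (\<Sum>Y\<in>L ?n k. \<Sum>Y'\<in>L ?n k. f Y * f Y' * real (card {Z\<in>L ?n (k-1). Z \<subseteq> Y \<and> Z \<subseteq> Y'})
        + (if Y = Y' then (f Y)^2 else 0))"
  proof (intro sum.cong refl)
    fix Y Y' assume YY: "Y \<in> L ?n k" "Y' \<in> L ?n k"
    note e = count_A[OF assms YY]
    show "f Y * f Y' * real (card {X\<in>L ?n k. X \<inter> Y = {} \<and> X \<inter> Y' = {}})
       = f Y * f Y' * real (card {Z\<in>L ?n (k-1). Z \<subseteq> Y \<and> Z \<subseteq> Y'}) + (if Y = Y' then (f Y)^2 else 0)"
      unfolding e by (simp add: distrib_left power2_eq_square)
  qed
  also have "\<dots> = (\<Sum>Y\<in>L ?n k. \<Sum>Y'\<in>L ?n k. f Y * f Y' * real (card {Z\<in>L ?n (k-1). Z \<subseteq> Y \<and> Z \<subseteq> Y'}))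
        + (\<Sum>Y\<in>L ?n k. (f Y)^2)"
    by (simp add: sum.distrib)
  also have "(\<Sum>Y\<in>L ?n k. \<Sum>Y'\<in>L ?n k. f Y * f Y' * real (card {Z\<in>L ?n (k-1). Z \<subseteq> Y \<and> Z \<subseteq> Y'}))
      = (\<Sum>Z\<in>L ?n (k-1). (W ?n k f Z)^2)"
    unfolding W_def by (rule sq_expand[symmetric]) simp_all
  finally show ?thesis .
qed

lemma A_bound:
  assumes "k \<ge> 1" "(\<Sum>Y\<in>L (2*k+1) k. f Y) = 0"
  shows "(\<Sum>X\<in>L (2*k+1) k. (Aop k f X)^2) \<le> (real k)^2 * (\<Sum>Y\<in>L (2*k+1) k. (f Y)^2)"
proof -
  have "(\<Sum>Z\<in>L (2*k+1) (k-1). (W (2*k+1) k f Z)^2)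
        \<le> (real k - 1) * (real (2*k+1) - real k) * (\<Sum>Y\<in>L (2*k+1) k. (f Y)^2)"
    by (rule Wbound) (use assms in auto)
  then show ?thesis unfolding A_expand[OF assms(1)] by (simp add: algebra_simps power2_eq_square)
qed


lemma alg:
  fixes N s t K :: real
  assumes N: "N > 0" and s: "0 \<le> s" "s \<le> N" and t: "0 \<le> t" "t \<le> N" and K: "K \<ge> 0"
    and h: "(t*s*(K+1)/N)^2 \<le> K^2*(s - s^2/N)*(t - t^2/N)"
  shows "(2*K+1)^2 * (s*t) \<le> K^2 * N^2"
proof (cases "s*t = 0")
  case True then show ?thesis by (simp only: True mult_zero_right) simp
next
  case False
  then have st: "s*t > 0" using s t by (simp add: less_le)
  have "(K+1)^2 * (s*t) * (s*t) = (t*s*(K+1)/N)^2 * N^2" using N by (simp add: power2_eq_square field_simps)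
  also have "\<dots> \<le> K^2*(s - s^2/N)*(t - t^2/N) * N^2" by (rule mult_right_mono[OF h]) simp
  also have "\<dots> = K^2 * (N-s)*(N-t) * (s*t)"
    using N by (simp add: power2_eq_square field_simps)
  finally have "(K+1)^2 * (s*t) * (s*t) \<le> K^2 * (N-s)*(N-t) * (s*t)" .
  then have h2: "(K+1)^2 * (s*t) \<le> K^2 * (N-s)*(N-t)" by (rule mult_right_le_imp_le[OF _ st])
  define u where "u = sqrt (s*t)"
  have u0: "u \<ge> 0" and uu: "u^2 = s*t" using st unfolding u_def by auto
  have e4: "(2*u)^2 = 4*(s*t)" using uu by (simp add: power_mult_distrib)
  have e5: "(s+t)^2 - 4*(s*t) = (s-t)^2" by (simp add: power2_eq_square algebra_simps)
  have "(2*u)^2 \<le> (s+t)^2" using e4 e5 zero_le_power2[of "s-t"] by linarith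
  then have stu: "2*u \<le> s+t" by (rule power2_le_imp_le) (use s t in simp)
  have "s*t \<le> N*N" by (rule mult_mono) (use s t in auto)
  then have "u^2 \<le> N^2" using uu by (simp add: power2_eq_square)
  then have uN: "u \<le> N" by (rule power2_le_imp_le) (use N in simp)
  have e6: "(N-s)*(N-t) = N^2 - N*(s+t) + u^2" using uu by (simp add: power2_eq_square algebra_simps)
  have "N*(2*u) \<le> N*(s+t)" using stu N by simp
  then have "(N-s)*(N-t) \<le> (N-u)^2" using e6 by (simp add: power2_eq_square algebra_simps)
  then have "K^2 * ((N-s)*(N-t)) \<le> K^2 * (N-u)^2" by (rule mult_left_mono) simp
  then have "((K+1)*u)^2 \<le> (K*(N-u))^2" using h2 uu
    by (simp add: power_mult_distrib mult.assoc)
  then have "(K+1)*u \<le> K*(N-u)" by (rule power2_le_imp_le) (use uN K in simp)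
  then have "(2*K+1)*u \<le> K*N" by (simp add: algebra_simps)
  then have "((2*K+1)*u)^2 \<le> (K*N)^2" using u0 K by (simp add: power_mono)
  then show ?thesis using uu by (simp add: power_mult_distrib)
qed


lemma sum_ind: "finite V \<Longrightarrow> S \<subseteq> V \<Longrightarrow> (\<Sum>Y\<in>V. if Y \<in> S then (1::real) else 0) = real (card S)"
  by (simp add: sum_if_card Int_absorb1 Collect_mem_eq Int_def[symmetric] Collect_conj_eq[symmetric])

lemma deg:
  assumes "X \<in> L (2*k+1) k"
  shows "card {Y\<in>L (2*k+1) k. X \<inter> Y = {}} = k + 1"
proof -
  have XS: "X \<subseteq> {1..2*k+1}" "card X = k" using assms unfolding L_def by auto
  have "{Y\<in>L (2*k+1) k. X \<inter> Y = {}} = {Y\<in>L (2*k+1) k. Y \<subseteq> {1..2*k+1} - X}"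
    unfolding L_def by blast
  also have "card \<dots> = card ({1..2*k+1} - X) choose k" by (rule count_sub) auto
  also have "card ({1..2*k+1} - X) = k + 1" using XS by (subst card_Diff_subset) (auto intro: finite_subset)
  finally show ?thesis by simp
qed

lemma cross:
  assumes k: "k \<ge> 1" and S: "S \<subseteq> L (2*k+1) k" and T: "T \<subseteq> L (2*k+1) k"
    and cr: "\<forall>X\<in>T. \<forall>Y\<in>S. X \<inter> Y \<noteq> {}"
  shows "real (card S) * real (card T) \<le> (real ((2*k) choose (k-1)))^2"
proof -
  define V where "V = L (2*k+1) k"
  define N where "N = real (card V)"
  define s where "s = real (card S)"
  define t where "t = real (card T)"
  define p where "p = s / N"
  define q where "q = t / N"
  define f where "f Y = (if Y \<in> S then 1 else 0) - p" for Y
  define g where "g Y = (if Y \<in> T then 1 else 0) - q" for Y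
  have fV: "finite V" unfolding V_def by simp
  have Nv: "N = real ((2*k+1) choose k)" unfolding N_def V_def card_L by simp
  have Npos: "N > 0" unfolding Nv by simp
  have sN: "s \<le> N" "0 \<le> s" unfolding s_def N_def using card_mono[OF fV S[folded V_def]] by auto
  have tN: "t \<le> N" "0 \<le> t" unfolding t_def N_def using card_mono[OF fV T[folded V_def]] by auto
  have sumf: "(\<Sum>Y\<in>V. f Y) = 0"
    unfolding f_def using sum_ind[OF fV S[folded V_def]] Npos
    by (simp add: sum_subtractf p_def s_def N_def)
  have sqf: "(\<Sum>Y\<in>V. (f Y)^2) = s - s^2/N"
  proof -
    have "(\<Sum>Y\<in>V. (f Y)^2) = (\<Sum>Y\<in>V. (1 - 2*p) * (if Y \<in> S then 1 else 0) + p^2)"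
      unfolding f_def by (intro sum.cong refl) (simp add: power2_eq_square algebra_simps)
    also have "\<dots> = (1 - 2*p) * s + N * p^2"
      using sum_ind[OF fV S[folded V_def]] by (simp add: sum.distrib sum_distrib_left[symmetric] s_def N_def)
    also have "\<dots> = s - s^2/N" unfolding p_def using Npos by (simp add: power2_eq_square field_simps)
    finally show ?thesis .
  qed
  have sqg: "(\<Sum>Y\<in>V. (g Y)^2) = t - t^2/N"
  proof -
    have "(\<Sum>Y\<in>V. (g Y)^2) = (\<Sum>Y\<in>V. (1 - 2*q) * (if Y \<in> T then 1 else 0) + q^2)"
      unfolding g_def by (intro sum.cong refl) (simp add: power2_eq_square algebra_simps)
    also have "\<dots> = (1 - 2*q) * t + N * q^2"
      using sum_ind[OF fV T[folded V_def]] by (simp add: sum.distrib sum_distrib_left[symmetric] t_def N_def)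
    also have "\<dots> = t - t^2/N" unfolding q_def using Npos by (simp add: power2_eq_square field_simps)
    finally show ?thesis .
  qed
  have AT: "Aop k f X = - p * (real k + 1)" if X: "X \<in> T" for X
  proof -
    have "Aop k f X = (\<Sum>Y\<in>V. if X \<inter> Y = {} then - p else 0)"
      unfolding Aop_def V_def[symmetric] f_def
      by (intro sum.cong refl) (use cr X in auto)
    also have "\<dots> = - p * real (card {Y\<in>V. X \<inter> Y = {}})" using fV by (rule sum_if_card)
    also have "card {Y\<in>V. X \<inter> Y = {}} = k + 1" unfolding V_def by (rule deg) (use X T in auto)
    finally show ?thesis by simp
  qed
  have sumA: "(\<Sum>X\<in>V. Aop k f X) = 0"
  proof -
    have "(\<Sum>X\<in>V. Aop k f X) = (\<Sum>Y\<in>V. \<Sum>X\<in>V. if X \<inter> Y = {} then f Y else 0)"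
      unfolding Aop_def V_def[symmetric] by (rule sum.swap)
    also have "\<dots> = (\<Sum>Y\<in>V. f Y * real (k + 1))"
    proof (intro sum.cong refl)
      fix Y assume Y: "Y \<in> V"
      have "card {X\<in>V. X \<inter> Y = {}} = k + 1"
        using deg[of Y k] Y unfolding V_def by (simp add: Int_commute)
      then show "(\<Sum>X\<in>V. if X \<inter> Y = {} then f Y else 0) = f Y * real (k + 1)"
        using sum_if_card[OF fV, of "\<lambda>X. X \<inter> Y = {}" "f Y"] by simp
    qed
    also have "\<dots> = 0" using sumf by (simp add: sum_distrib_right[symmetric])
    finally show ?thesis .
  qed
  have inner: "(\<Sum>X\<in>V. g X * Aop k f X) = - t * p * (real k + 1)"
  proof -
    have "(\<Sum>X\<in>V. g X * Aop k f X) = (\<Sum>X\<in>V. if X \<in> T then Aop k f X else 0) - q * (\<Sum>X\<in>V. Aop k f X)"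
    proof -
      have "(\<Sum>X\<in>V. g X * Aop k f X) = (\<Sum>X\<in>V. (if X \<in> T then Aop k f X else 0) - q * Aop k f X)"
        unfolding g_def by (intro sum.cong refl) (simp add: algebra_simps)
      then show ?thesis by (simp add: sum_subtractf sum_distrib_left)
    qed
    also have "(\<Sum>X\<in>V. if X \<in> T then Aop k f X else 0) = (\<Sum>X\<in>V. if X \<in> T then - p * (real k + 1) else 0)"
      using AT by (intro sum.cong refl) auto
    also have "\<dots> = - p * (real k + 1) * t" unfolding t_def using fV T[folded V_def]
      by (simp add: sum_if_card Int_absorb1 Int_def[symmetric] Collect_conj_eq[symmetric])
    finally show ?thesis using sumA by simp
  qed
  have CS: "(\<Sum>X\<in>V. g X * Aop k f X)^2 \<le> (\<Sum>X\<in>V. (g X)^2) * (\<Sum>X\<in>V. (Aop k f X)^2)"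
    by (rule Cauchy_Schwarz_ineq_sum)
  have Ab: "(\<Sum>X\<in>V. (Aop k f X)^2) \<le> (real k)^2 * (\<Sum>Y\<in>V. (f Y)^2)"
    unfolding V_def by (rule A_bound[OF k]) (use sumf V_def in simp)
  have "(\<Sum>X\<in>V. (g X)^2) * (\<Sum>X\<in>V. (Aop k f X)^2) \<le> (\<Sum>X\<in>V. (g X)^2) * ((real k)^2 * (\<Sum>Y\<in>V. (f Y)^2))"
    by (rule mult_left_mono[OF Ab]) (simp add: sum_nonneg)
  with CS have "(t*s*(real k+1)/N)^2 \<le> (real k)^2*(s - s^2/N)*(t - t^2/N)"
    unfolding inner sqf sqg p_def by (simp add: power2_eq_square algebra_simps)
  then have main: "(2*real k+1)^2 * (s*t) \<le> (real k)^2 * N^2"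
    by (intro alg) (use Npos sN tN in auto)
  have "Suc (2*k) * ((2*k) choose (k-1)) = (Suc (2*k) choose Suc (k-1)) * Suc (k-1)"
    by (rule Suc_times_binomial_eq)
  then have "(2*k+1) * ((2*k) choose (k-1)) = ((2*k+1) choose k) * k" using k by simp
  then have rel: "real k * N = (2*real k+1) * real ((2*k) choose (k-1))"
    unfolding Nv by (metis (mono_tags, lifting) mult.commute of_nat_Suc of_nat_mult Suc_eq_plus1 of_nat_add of_nat_1 mult_2 of_nat_numeral)
  have "(2*real k+1)^2 * (s*t) \<le> (2*real k+1)^2 * (real ((2*k) choose (k-1)))^2"
    using main rel by (simp add: power_mult_distrib[symmetric] mult.commute)
  then show ?thesis unfolding s_def t_def by simp
qed



lemma fin_alg:
  fixes r s t R :: real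
  assumes "0 < r" "r \<le> s" "s \<le> R" "s * t \<le> R^2"
  shows "s + t \<le> r + R^2 / r"
proof -
  have sp: "s > 0" using assms by simp
  have t: "t \<le> R^2 / s" using assms sp by (simp add: field_simps mult.commute)
  have rs: "r * s \<le> R^2" unfolding power2_eq_square by (rule mult_mono) (use assms in auto)
  have "(r * s) * (s - r) \<le> R^2 * (s - r)" by (rule mult_right_mono[OF rs]) (use assms in simp)
  then have "s + R^2 / s \<le> r + R^2 / r" using assms sp by (simp add: field_simps power2_eq_square)
  then show ?thesis using t by simp
qed

lemma kv: "kneser_vertices n k = L n k" unfolding kneser_vertices_def L_def by simp

theorem lemma3p4:
  fixes k :: nat and rstar :: real
  assumes "k \<ge> 1"
    and "0 < rstar" and "rstar \<le> real ((2*k) choose (k-1))"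
  shows "Min {card (boundary (kneser_vertices (2*k+1) k) kneser_adj S) | S.
              S \<subseteq> kneser_vertices (2*k+1) k \<and> rstar \<le> real (card S)
              \<and> card S \<le> (2*k) choose (k-1)}
         \<ge> real ((2*k+1) choose k) - (real ((2*k) choose (k-1)))^2 / rstar - rstar"
proof -
  define V where "V = L (2*k+1) k"
  define R where "R = (2*k) choose (k-1)"
  define \<Phi> where "\<Phi> = {card (boundary (kneser_vertices (2*k+1) k) kneser_adj S) | S.
              S \<subseteq> kneser_vertices (2*k+1) k \<and> rstar \<le> real (card S)
              \<and> card S \<le> (2*k) choose (k-1)}"
  have fV: "finite V" unfolding V_def by simp
  have cV: "card V = (2*k+1) choose k" unfolding V_def card_L by simp
  have RV: "R \<le> card V" unfolding cV R_def using binomial_Suc_Suc[of "2*k" "k-1"] assms(1) by simp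
  have \<Phi>eq: "\<Phi> = (\<lambda>S. card (boundary V kneser_adj S)) ` {S. S \<subseteq> V \<and> rstar \<le> real (card S) \<and> card S \<le> R}"
    unfolding \<Phi>_def V_def R_def kv by blast
  have fin: "finite \<Phi>" unfolding \<Phi>eq using fV by simp
  define m where "m = nat \<lceil>rstar\<rceil>"
  have rm: "rstar \<le> real m" unfolding m_def by linarith
  have mR: "m \<le> R" unfolding m_def R_def using assms(3) by (simp add: nat_le_iff ceiling_le_iff)
  obtain S0 where "S0 \<subseteq> V" "card S0 = m" using obtain_subset_with_card_n[of m V] mR RV by auto
  then have ne: "\<Phi> \<noteq> {}" unfolding \<Phi>eq using rm mR by blast
  have "Min \<Phi> \<in> \<Phi>" using Min_in[OF fin ne] .
  then obtain S where S: "S \<subseteq> V" "rstar \<le> real (card S)" "card S \<le> R"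
    and MS: "Min \<Phi> = card (boundary V kneser_adj S)" unfolding \<Phi>eq by blast
  define B where "B = boundary V kneser_adj S"
  define T where "T = V - S - B"
  have BV: "B \<subseteq> V - S" unfolding B_def boundary_def by auto
  have cr: "\<forall>X\<in>T. \<forall>Y\<in>S. X \<inter> Y \<noteq> {}"
    unfolding T_def B_def boundary_def kneser_adj_def by blast
  have TV: "T \<subseteq> V" unfolding T_def by blast
  have "card (V - S) = card B + card T"
  proof -
    have "V - S = B \<union> T" "B \<inter> T = {}" unfolding T_def using BV by auto
    moreover have "finite B" "finite T" using BV TV fV finite_subset by blast+
    ultimately show ?thesis by (simp add: card_Un_disjoint)
  qed
  moreover have "card (V - S) = card V - card S" using S fV by (simp add: card_Diff_subset finite_subset)
  moreover have "card S \<le> card V" using S fV card_mono by blast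
  ultimately have cB: "real (card B) = real (card V) - real (card S) - real (card T)" by simp
  have st: "real (card S) * real (card T) \<le> (real R)^2"
    unfolding R_def by (rule cross[OF assms(1)]) (use S TV cr V_def in auto)
  have "real (card S) + real (card T) \<le> rstar + (real R)^2 / rstar"
    by (rule fin_alg[OF assms(2) S(2) _ st]) (use S in simp)
  then show ?thesis
    using cB MS cV unfolding \<Phi>_def[symmetric] B_def R_def by simp
qed

end
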